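(* Let $G=(V,E)$ be a chain graph. An edge $e\in E$ is chain-safe (i.e., $G-e$ is a chain graph) if and only if $e$ is not the middle edge of an induced $P_4$ in $G$.
   Context: A chain graph is a bipartite graph whose vertex set can be partitioned into two independent sets $X,Y$ such that the neighborhoods of the vertices of $X$ are linearly ordered by inclusion. The middle edge of a path $P_4$ is the edge joining its two degree-2 vertices. *)

theory Defs
  imports Main
begin

definition graph :: "'a set \<Rightarrow> 'a set set \<Rightarrow> bool" where
  "graph V E \<longleftrightarrow> finite V \<and> (\<forall>e\<in>E. \<exists>u v. e = {u, v} \<and> u \<noteq> v \<and> u \<in> V \<and> v \<in> V)"

definition nbhd :: "'a set set \<Rightarrow> 'a \<Rightarrow> 'a set" where
  "nbhd E v = {u. {u, v} \<in> E}"

definition independent :: "'a set set \<Rightarrow> 'a set \<Rightarrow> bool" where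
  "independent E S \<longleftrightarrow> (\<forall>u\<in>S. \<forall>v\<in>S. {u, v} \<notin> E)"

definition chain_graph :: "'a set \<Rightarrow> 'a set set \<Rightarrow> bool" where
  "chain_graph V E \<longleftrightarrow> graph V E \<and>
     (\<exists>X Y. X \<union> Y = V \<and> X \<inter> Y = {} \<and> independent E X \<and> independent E Y \<and>
        (\<forall>x\<in>X. \<forall>x'\<in>X. nbhd E x \<subseteq> nbhd E x' \<or> nbhd E x' \<subseteq> nbhd E x))"

definition middle_edge_of_induced_P4 :: "'a set \<Rightarrow> 'a set set \<Rightarrow> 'a set \<Rightarrow> bool" where
  "middle_edge_of_induced_P4 V E e \<longleftrightarrow>
     (\<exists>a u v b. e = {u, v} \<and> a \<in> V \<and> u \<in> V \<and> v \<in> V \<and> b \<in> V \<and> distinct [a, u, v, b] \<and>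
        {a, u} \<in> E \<and> {u, v} \<in> E \<and> {v, b} \<in> E \<and>
        {a, v} \<notin> E \<and> {u, b} \<notin> E \<and> {a, b} \<notin> E)"

end

theory Submission
  imports Defs
begin

lemma edge_props:
  assumes "graph V E" "{a, b} \<in> E"
  shows "a \<noteq> b \<and> a \<in> V \<and> b \<in> V"
  using assms unfolding graph_def by (force simp: doubleton_eq_iff)

lemma no_2K2:
  assumes part: "X \<union> Y = V" "X \<inter> Y = {}" and iX: "independent F X" and iY: "independent F Y"
    and nest: "\<forall>x\<in>X. \<forall>x'\<in>X. nbhd F x \<subseteq> nbhd F x' \<or> nbhd F x' \<subseteq> nbhd F x"
    and V: "a \<in> V" "u \<in> V" "v \<in> V" "b \<in> V"
    and e1: "{a, u} \<in> F" and e2: "{v, b} \<in> F"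
    and n1: "{u, v} \<notin> F" and n2: "{a, v} \<notin> F" and n3: "{u, b} \<notin> F" and n4: "{a, b} \<notin> F"
  shows False
proof -
  have c: "{x, y} = {y, x}" for x y :: 'a by (rule insert_commute)
  have au: "(a \<in> X \<and> u \<in> Y) \<or> (a \<in> Y \<and> u \<in> X)"
    using iX iY e1 part V unfolding independent_def by blast
  have vb: "(v \<in> X \<and> b \<in> Y) \<or> (v \<in> Y \<and> b \<in> X)"
    using iX iY e2 part V unfolding independent_def by blast
  have N: "y \<in> nbhd F x \<longleftrightarrow> {x, y} \<in> F" for x y using c unfolding nbhd_def by auto
  from au vb show False
  proof (elim disjE conjE)
    assume h: "a \<in> X" "v \<in> X"
    have "u \<in> nbhd F a" "u \<notin> nbhd F v" "b \<in> nbhd F v" "b \<notin> nbhd F a"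
      unfolding N using e1 e2 n1 n2 n3 n4 by (simp_all add: insert_commute)
    moreover have "nbhd F a \<subseteq> nbhd F v \<or> nbhd F v \<subseteq> nbhd F a" using nest h by blast
    ultimately show False by blast
  next
    assume h: "a \<in> X" "b \<in> X"
    have "u \<in> nbhd F a" "u \<notin> nbhd F b" "v \<in> nbhd F b" "v \<notin> nbhd F a"
      unfolding N using e1 e2 n1 n2 n3 n4 by (simp_all add: insert_commute)
    moreover have "nbhd F a \<subseteq> nbhd F b \<or> nbhd F b \<subseteq> nbhd F a" using nest h by blast
    ultimately show False by blast
  next
    assume h: "u \<in> X" "v \<in> X"
    have "a \<in> nbhd F u" "a \<notin> nbhd F v" "b \<in> nbhd F v" "b \<notin> nbhd F u"
      unfolding N using e1 e2 n1 n2 n3 n4 by (simp_all add: insert_commute)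
    moreover have "nbhd F u \<subseteq> nbhd F v \<or> nbhd F v \<subseteq> nbhd F u" using nest h by blast
    ultimately show False by blast
  next
    assume h: "u \<in> X" "b \<in> X"
    have "a \<in> nbhd F u" "a \<notin> nbhd F b" "v \<in> nbhd F b" "v \<notin> nbhd F u"
      unfolding N using e1 e2 n1 n2 n3 n4 by (simp_all add: insert_commute)
    moreover have "nbhd F u \<subseteq> nbhd F b \<or> nbhd F b \<subseteq> nbhd F u" using nest h by blast
    ultimately show False by blast
  qed
qed

theorem lemma4p5:
  fixes V :: "'a set" and E :: "'a set set" and e :: "'a set"
  assumes "chain_graph V E" and "e \<in> E"
  shows "chain_graph V (E - {e}) \<longleftrightarrow> \<not> middle_edge_of_induced_P4 V E e"
proof
  assume ch: "chain_graph V (E - {e})"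
  show "\<not> middle_edge_of_induced_P4 V E e"
  proof
    assume "middle_edge_of_induced_P4 V E e"
    then obtain a u v b where m: "e = {u, v}" "a \<in> V" "u \<in> V" "v \<in> V" "b \<in> V" "distinct [a, u, v, b]"
        "{a, u} \<in> E" "{u, v} \<in> E" "{v, b} \<in> E" "{a, v} \<notin> E" "{u, b} \<notin> E" "{a, b} \<notin> E"
      unfolding middle_edge_of_induced_P4_def by blast
    from ch obtain X Y where XY: "X \<union> Y = V" "X \<inter> Y = {}" "independent (E - {e}) X"
      "independent (E - {e}) Y"
      "\<forall>x\<in>X. \<forall>x'\<in>X. nbhd (E - {e}) x \<subseteq> nbhd (E - {e}) x' \<or> nbhd (E - {e}) x' \<subseteq> nbhd (E - {e}) x"
      unfolding chain_graph_def by blast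
    have "{a, u} \<in> E - {e}" "{v, b} \<in> E - {e}" using m by (auto simp: doubleton_eq_iff)
    moreover have "{u, v} \<notin> E - {e}" "{a, v} \<notin> E - {e}" "{u, b} \<notin> E - {e}" "{a, b} \<notin> E - {e}"
      using m by auto
    ultimately show False using no_2K2[OF XY] m by blast
  qed
next
  assume nm: "\<not> middle_edge_of_induced_P4 V E e"
  from assms(1) have g: "graph V E" unfolding chain_graph_def by blast
  from assms(1) obtain X Y where XY: "X \<union> Y = V" "X \<inter> Y = {}" "independent E X"
      "independent E Y"
      and nest: "\<forall>x\<in>X. \<forall>x'\<in>X. nbhd E x \<subseteq> nbhd E x' \<or> nbhd E x' \<subseteq> nbhd E x"
    unfolding chain_graph_def by blast
  have c: "{x, y} = {y, x}" for x y :: 'a by (rule insert_commute)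
  have N: "y \<in> nbhd F x \<longleftrightarrow> {x, y} \<in> F" for x y and F :: "'a set set"
    using c unfolding nbhd_def by auto
  obtain p q where e: "e = {p, q}" "p \<in> X" "q \<in> Y"
  proof -
    obtain s t where st: "e = {s, t}" using g assms(2) unfolding graph_def by blast
    have "s \<noteq> t \<and> s \<in> V \<and> t \<in> V" using edge_props[OF g] st assms(2) by blast
    hence "(s \<in> X \<and> t \<in> Y) \<or> (t \<in> X \<and> s \<in> Y)"
      using XY st assms(2) unfolding independent_def by blast
    thus ?thesis using that[of s t] that[of t s] st by (auto simp: insert_commute)
  qed
  have g': "graph V (E - {e})" using g unfolding graph_def by blast
  have i': "independent (E - {e}) X" "independent (E - {e}) Y"
    using XY unfolding independent_def by blast+
  have nest': "nbhd (E - {e}) x \<subseteq> nbhd (E - {e}) x' \<or> nbhd (E - {e}) x' \<subseteq> nbhd (E - {e}) x"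
    if xX: "x \<in> X" "x' \<in> X" for x x'
  proof (rule ccontr)
    assume "\<not> ?thesis"
    then obtain y z where "y \<in> nbhd (E - {e}) x" "y \<notin> nbhd (E - {e}) x'"
      "z \<in> nbhd (E - {e}) x'" "z \<notin> nbhd (E - {e}) x"
      by (auto simp only: subset_iff)
    hence y: "{x, y} \<in> E - {e}" "{x', y} \<notin> E - {e}"
      and z: "{x', z} \<in> E - {e}" "{x, z} \<notin> E - {e}"
      unfolding N by simp_all
    have key: False if A: "w \<in> X" "w' \<in> X" "{w, y'} \<in> E - {e}" "{w', y'} \<notin> E - {e}"
        "{w', z'} \<in> E - {e}" "{w, z'} \<notin> E - {e}" and True: "w = p" for w w' y' z'
    proof -
      have nw: "nbhd E w \<subseteq> nbhd E w' \<or> nbhd E w' \<subseteq> nbhd E w" using nest A by blast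
      have "w \<noteq> w'" using A by blast
        have "w' \<noteq> p" using A True by blast
        have nwy: "{w', y'} \<notin> E"
          using A(4) A(2) XY(2) e \<open>w' \<noteq> p\<close> by (auto simp: doubleton_eq_iff)
        hence "\<not> nbhd E w \<subseteq> nbhd E w'" using N A(3) by blast
        hence sub: "nbhd E w' \<subseteq> nbhd E w" using nw by blast
        have "{w', z'} \<in> E" using A by blast
        hence "{w, z'} \<in> E" using sub N by blast
        hence zq: "z' = q" using A(6) True e by (auto simp: doubleton_eq_iff)
        have yv: "{w, y'} \<in> E" "y' \<noteq> q" using A(3) True e by (auto simp: doubleton_eq_iff)
        have yV: "y' \<in> V" using edge_props[OF g yv(1)] by blast
        have "y' \<notin> X" using XY(3) A(1) yv(1) unfolding independent_def by blast
        hence yY: "y' \<in> Y" using yV XY(1) by blast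
        have "middle_edge_of_induced_P4 V E e"
          unfolding middle_edge_of_induced_P4_def
        proof (intro exI conjI)
          show "e = {p, q}" by (rule e)
          show "y' \<in> V" "p \<in> V" "q \<in> V" "w' \<in> V" using XY yY e A by blast+
          show "{y', p} \<in> E" using yv True c by metis
          show "{p, q} \<in> E" using e assms(2) by blast
          show "{q, w'} \<in> E" using A(5) zq by (simp add: insert_commute)
          show "{y', q} \<notin> E" using XY(4) yY e(3) unfolding independent_def by blast
          show "{p, w'} \<notin> E" using XY(3) e(2) A(2) unfolding independent_def by blast
          show "{y', w'} \<notin> E" using nwy by (simp add: insert_commute)
          show "distinct [y', p, q, w']"
          proof -
            have "y' \<noteq> p" using edge_props[OF g yv(1)] True by auto
            moreover have "p \<noteq> q" "q \<noteq> w'" "y' \<noteq> w'" using XY(2) e(2,3) yY A(2) by blast+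
            ultimately show ?thesis using yv(2) \<open>w' \<noteq> p\<close> by simp
          qed
        qed
        thus False using nm by blast
    qed
    show False
    proof (cases "x = p")
      case True
      show False using key[OF xX y z True] .
    next
      case xp: False
      show False
      proof (cases "x' = p")
        case True
        show False using key[OF xX(2,1) z y True] .
      next
        case False
        have nw: "nbhd E x \<subseteq> nbhd E x' \<or> nbhd E x' \<subseteq> nbhd E x" using nest xX by blast
        have xq: "x \<noteq> q" "x' \<noteq> q" using xX XY(2) e(3) by blast+
        have "{x, y} \<in> E" "{x', y} \<notin> E" "{x', z} \<in> E" "{x, z} \<notin> E"
          using y z xp False e xq by (auto simp: doubleton_eq_iff)
        hence "y \<in> nbhd E x" "y \<notin> nbhd E x'" "z \<in> nbhd E x'" "z \<notin> nbhd E x"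
          unfolding N by simp_all
        thus False using nw by blast
      qed
    qed
  qed
  have nall: "\<forall>x\<in>X. \<forall>x'\<in>X. nbhd (E - {e}) x \<subseteq> nbhd (E - {e}) x' \<or> nbhd (E - {e}) x' \<subseteq> nbhd (E - {e}) x"
    using nest' by blast
  show "chain_graph V (E - {e})"
    unfolding chain_graph_def
    apply (rule conjI[OF g'])
    apply (rule exI[of _ X], rule exI[of _ Y])
    using XY(1,2) i' nall by simp
qed

end
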